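(* Let $P(\mathbf{x})$ be set-multilinear with respect to $\mathbf{x}=\mathbf{x}_1\sqcup\cdots\sqcup\mathbf{x}_r$, and let $\mathbf{y}=\mathbf{x}_1\cup\cdots\cup\mathbf{x}_k$ and $\mathbf{z}=\mathbf{x}\setminus\mathbf{y}$. If the dimension of projected shifted partial derivatives is taken with respect to derivatives by set-multilinear monomials in $\mathbf{y}$ only, then for every $\ell$, $\Gamma^{\mathrm{PSPD}}_{k,\ell}(P)\le\Gamma^{\mathrm{SED}}_{k,\ell}(P)$.
   Context: A polynomial is set-multilinear with respect to $\mathbf{x}=\mathbf{x}_1\sqcup\cdots\sqcup\mathbf{x}_r$ if every monomial contains exactly one variable from each part. Let $|\mathbf{y}|=n_y$, $|\mathbf{z}|=n_z$, order variables with $\mathbf{y}$ first, and let $S\subseteq\{0,1\}^{n_y+n_z}$ be the set of strings that are zero on the $\mathbf{y}$ coordinates. For a polynomial $f$ and set $T$ of points, $\mathrm{Eval}_T(f)$ is the vector of values of $f$ on $T$. $\mathbf{z}^{=\ell}$ is the set of monomials of degree exactly $\ell$ in $\mathbf{z}$. Here $\Gamma^{\mathrm{PSPD}}_{k,\ell}(P)=\dim\mathrm{Span}\{\mathrm{Eval}_S(m\cdot \partial P/\partial\mathbf{y}^{\mathbf{e}}) : m\in\mathbf{z}^{=\ell},\ \mathbf{y}^{\mathbf{e}}$ a degree-$k$ monomial in $\mathbf{y}$ that is set-multilinear with respect to $\mathbf{x}_1\sqcup\cdots\sqcup\mathbf{x}_k\}$. The shifted evaluation dimension is $\Gamma^{\mathrm{SED}}_{k,\ell}(P)=\dim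 \mathrm{Span}\{\mathrm{Eval}_{\{0,1\}^{n_z}}(m\cdot P(\mathbf{a},\mathbf{z})) : m\in\mathbf{z}^{=\ell},\ \mathbf{a}\in\{0,1\}^{n_y}$ with at most $k$ ones$\}$. *)

theory Defs
  imports Complex_Main "HOL-Library.Function_Algebras"
begin

text \<open>Multivariate polynomials over a field 'a in variables from a finite set X
  (of type 'v) are represented by coefficient functions on exponent vectors
  ('v \<Rightarrow> nat); exponent vectors are required to vanish outside X.
  The partition x = x_1 \<squnion> ... \<squnion> x_r is given by a map part : X \<rightarrow> {1..r}.\<close>

definition monom_on :: "'v set \<Rightarrow> ('v \<Rightarrow> nat) \<Rightarrow> bool" where
  "monom_on V m \<longleftrightarrow> (\<forall>v. v \<notin> V \<longrightarrow> m v = 0)"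

definition set_multilinear ::
  "'v set \<Rightarrow> ('v \<Rightarrow> nat) \<Rightarrow> nat \<Rightarrow> (('v \<Rightarrow> nat) \<Rightarrow> 'a::zero) \<Rightarrow> bool" where
  "set_multilinear X part r P \<longleftrightarrow>
     (\<forall>m. P m \<noteq> 0 \<longrightarrow> monom_on X m \<and>
        (\<forall>i\<in>{1..r}. (\<Sum>v\<in>{v\<in>X. part v = i}. m v) = 1))"

definition mono_eval :: "'v set \<Rightarrow> ('v \<Rightarrow> nat) \<Rightarrow> ('v \<Rightarrow> 'a::comm_ring_1) \<Rightarrow> 'a" where
  "mono_eval X m a = (\<Prod>v\<in>X. a v ^ m v)"

definition poly_eval ::
  "'v set \<Rightarrow> (('v \<Rightarrow> nat) \<Rightarrow> 'a::comm_ring_1) \<Rightarrow> ('v \<Rightarrow> 'a) \<Rightarrow> 'a" where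
  "poly_eval X P a = (\<Sum>m\<in>{m. P m \<noteq> 0}. P m * mono_eval X m a)"

definition pderiv_mono ::
  "'v set \<Rightarrow> ('v \<Rightarrow> nat) \<Rightarrow> (('v \<Rightarrow> nat) \<Rightarrow> 'a::comm_ring_1) \<Rightarrow> ('v \<Rightarrow> nat) \<Rightarrow> 'a" where
  "pderiv_mono X e P = (\<lambda>m. if monom_on X m
      then of_nat (\<Prod>v\<in>X. fact (m v + e v) div fact (m v)) * P (\<lambda>v. m v + e v)
      else 0)"

definition bool_points :: "'v set \<Rightarrow> ('v \<Rightarrow> 'a::zero_neq_one) set" where
  "bool_points V = {a. (\<forall>v\<in>V. a v = 0 \<or> a v = 1) \<and> (\<forall>v. v \<notin> V \<longrightarrow> a v = 0)}"

definition eval_vec :: "'b set \<Rightarrow> ('b \<Rightarrow> 'a::zero) \<Rightarrow> 'b \<Rightarrow> 'a" where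
  "eval_vec T f = (\<lambda>a. if a \<in> T then f a else 0)"

definition fscale :: "'a::field \<Rightarrow> ('b \<Rightarrow> 'a) \<Rightarrow> 'b \<Rightarrow> 'a" where
  "fscale c f = (\<lambda>x. c * f x)"

definition span_dim :: "('b \<Rightarrow> 'a::field) set \<Rightarrow> nat" where
  "span_dim G = vector_space.dim fscale (module.span fscale G)"

definition deg_monoms :: "'v set \<Rightarrow> nat \<Rightarrow> ('v \<Rightarrow> nat) set" where
  "deg_monoms V l = {m. monom_on V m \<and> (\<Sum>v\<in>V. m v) = l}"

definition sml_monoms :: "'v set \<Rightarrow> ('v \<Rightarrow> nat) \<Rightarrow> nat \<Rightarrow> ('v \<Rightarrow> nat) set" where
  "sml_monoms Y part k = {e. monom_on Y e \<and>
      (\<forall>i\<in>{1..k}. (\<Sum>v\<in>{v\<in>Y. part v = i}. e v) = 1)}"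

definition yvars :: "'v set \<Rightarrow> ('v \<Rightarrow> nat) \<Rightarrow> nat \<Rightarrow> 'v set" where
  "yvars X part k = {v\<in>X. part v \<in> {1..k}}"

definition zvars :: "'v set \<Rightarrow> ('v \<Rightarrow> nat) \<Rightarrow> nat \<Rightarrow> 'v set" where
  "zvars X part k = X - yvars X part k"

definition Gamma_PSPD ::
  "'v set \<Rightarrow> ('v \<Rightarrow> nat) \<Rightarrow> nat \<Rightarrow> nat \<Rightarrow> (('v \<Rightarrow> nat) \<Rightarrow> 'a::field) \<Rightarrow> nat" where
  "Gamma_PSPD X part k l P = span_dim
     {eval_vec (bool_points (zvars X part k))
        (\<lambda>a. mono_eval X mz a * poly_eval X (pderiv_mono X e P) a)
      | mz e. mz \<in> deg_monoms (zvars X part k) l \<and> e \<in> sml_monoms (yvars X part k) part k}"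

definition Gamma_SED ::
  "'v set \<Rightarrow> ('v \<Rightarrow> nat) \<Rightarrow> nat \<Rightarrow> nat \<Rightarrow> (('v \<Rightarrow> nat) \<Rightarrow> 'a::field) \<Rightarrow> nat" where
  "Gamma_SED X part k l P = span_dim
     {eval_vec (bool_points (zvars X part k))
        (\<lambda>b. mono_eval X mz b *
             poly_eval X P (\<lambda>v. if v \<in> yvars X part k then a v else b v))
      | mz a. mz \<in> deg_monoms (zvars X part k) l \<and> a \<in> bool_points (yvars X part k)
              \<and> card {v \<in> yvars X part k. a v \<noteq> 0} \<le> k}"

end

theory Submission
  imports Defs "HOL-Library.FuncSet"
begin

lemma card_nz_le_sum:
  fixes f :: "'b \<Rightarrow> nat"
  assumes "finite A"
  shows "card {v\<in>A. f v \<noteq> 0} \<le> sum f A"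
proof -
  have "card {v\<in>A. f v \<noteq> 0} = (\<Sum>v\<in>{v\<in>A. f v \<noteq> 0}. 1)" by simp
  also have "\<dots> \<le> (\<Sum>v\<in>{v\<in>A. f v \<noteq> 0}. f v)" by (rule sum_mono) auto
  also have "\<dots> \<le> sum f A" by (rule sum_mono2) (use assms in auto)
  finally show ?thesis .
qed

lemma finite_deg_monoms:
  assumes "finite V" shows "finite (deg_monoms V l)"
proof -
  have "deg_monoms V l \<subseteq> (\<lambda>f v. if v\<in>V then f v else 0) ` (PiE V (\<lambda>_. {0..l}))"
  proof
    fix m assume m: "m \<in> deg_monoms V l"
    hence mon: "monom_on V m" and s: "(\<Sum>v\<in>V. m v) = l" by (auto simp: deg_monoms_def)
    have "restrict m V \<in> PiE V (\<lambda>_. {0..l})"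
      using member_le_sum[of _ V m] assms s by (auto simp: PiE_iff)
    moreover have "m = (\<lambda>v. if v\<in>V then restrict m V v else 0)"
      using mon by (auto simp: monom_on_def fun_eq_iff)
    ultimately show "m \<in> (\<lambda>f v. if v\<in>V then f v else 0) ` (PiE V (\<lambda>_. {0..l}))" by blast
  qed
  thus ?thesis by (rule finite_subset) (use assms in \<open>auto intro: finite_PiE\<close>)
qed

lemma finite_bool_points:
  assumes "finite V" shows "finite (bool_points V :: ('v \<Rightarrow> 'a::zero_neq_one) set)"
proof -
  have "bool_points V \<subseteq> (\<lambda>S v. if v\<in>S then (1::'a) else 0) ` Pow V"
  proof
    fix a :: "'v \<Rightarrow> 'a" assume "a \<in> bool_points V"
    hence "a = (\<lambda>v. if v \<in> {v\<in>V. a v = 1} then 1 else 0)"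
      by (auto simp: bool_points_def fun_eq_iff)
    thus "a \<in> (\<lambda>S v. if v\<in>S then (1::'a) else 0) ` Pow V" by blast
  qed
  thus ?thesis by (rule finite_subset) (use assms in auto)
qed

context
  fixes X :: "'v set" and part :: "'v \<Rightarrow> nat" and r k :: nat
    and P :: "('v \<Rightarrow> nat) \<Rightarrow> 'a::field" and e :: "'v \<Rightarrow> nat"
  assumes fin: "finite X"
    and prt: "\<forall>v\<in>X. part v \<in> {1..r}"
    and sml: "set_multilinear X part r P"
    and e: "e \<in> sml_monoms (yvars X part k) part k"
begin

abbreviation "Y \<equiv> yvars X part k"

lemma Y_sub: "Y \<subseteq> X" by (auto simp: yvars_def)

lemma part_eq: "i \<in> {1..k} \<Longrightarrow> {v\<in>Y. part v = i} = {v\<in>X. part v = i}"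
  by (auto simp: yvars_def)

lemma e_out: "v \<notin> Y \<Longrightarrow> e v = 0"
  using e by (auto simp: sml_monoms_def monom_on_def)

lemma e_sum: "i \<in> {1..k} \<Longrightarrow> (\<Sum>v\<in>{v\<in>X. part v = i}. e v) = 1"
  using e part_eq by (auto simp: sml_monoms_def)

lemma e_le1: "e v \<le> 1"
proof (cases "v \<in> Y")
  case True
  then have i: "part v \<in> {1..k}" "v \<in> X" by (auto simp: yvars_def)
  have "e v \<le> (\<Sum>w\<in>{w\<in>X. part w = part v}. e w)"
    by (rule member_le_sum) (use fin i in auto)
  then show ?thesis using e_sum[OF i(1)] by simp
qed (simp add: e_out)

lemma P_mon: "P m \<noteq> 0 \<Longrightarrow> monom_on X m"
  using sml by (auto simp: set_multilinear_def)

lemma P_sum: "P m \<noteq> 0 \<Longrightarrow> i \<in> {1..r} \<Longrightarrow> (\<Sum>v\<in>{v\<in>X. part v = i}. m v) = 1"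
  using sml by (auto simp: set_multilinear_def)

lemma P_le1: "P m \<noteq> 0 \<Longrightarrow> m v \<le> 1"
proof (cases "v \<in> X")
  case True
  assume P: "P m \<noteq> 0"
  have "m v \<le> (\<Sum>w\<in>{w\<in>X. part w = part v}. m w)"
    by (rule member_le_sum) (use fin True in auto)
  then show ?thesis using P_sum[OF P, of "part v"] prt True by simp
next
  case False
  assume P: "P m \<noteq> 0"
  then show ?thesis using P_mon[OF P] False by (auto simp: monom_on_def)
qed

lemma finite_M: "finite {m. P m \<noteq> 0}"
proof -
  have "{m. P m \<noteq> 0} \<subseteq> (\<lambda>S v. if v\<in>S then (1::nat) else 0) ` Pow X"
  proof
    fix m assume m: "m \<in> {m. P m \<noteq> 0}"
    hence "m = (\<lambda>v. if v \<in> {v\<in>X. m v = 1} then 1 else 0)"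
      using P_le1[of m] P_mon[of m] by (force simp: fun_eq_iff monom_on_def le_Suc_eq)
    thus "m \<in> (\<lambda>S v. if v\<in>S then (1::nat) else 0) ` Pow X" by blast
  qed
  thus ?thesis by (rule finite_subset) (use fin in auto)
qed

lemma shift_zero:
  assumes "P (\<lambda>v. m v + e v) \<noteq> 0" "v \<in> Y"
  shows "m v = 0"
proof -
  from assms(2) have i: "part v \<in> {1..k}" "v \<in> X" by (auto simp: yvars_def)
  let ?A = "{w\<in>X. part w = part v}"
  have fA: "finite ?A" using fin by auto
  have "(\<Sum>w\<in>?A. m w + e w) = 1" using P_sum[OF assms(1), of "part v"] prt i by simp
  hence "(\<Sum>w\<in>?A. m w) + 1 = 1" using e_sum[OF i(1)] by (simp add: sum.distrib)
  hence "(\<Sum>w\<in>?A. m w) = 0" by simp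
  thus ?thesis using fA i by simp
qed

lemma coeff_one:
  assumes "\<forall>v\<in>Y. m v = 0"
  shows "(\<Prod>v\<in>X. fact (m v + e v) div fact (m v)) = (1::nat)"
proof (rule prod.neutral, rule ballI)
  fix v assume "v \<in> X"
  show "fact (m v + e v) div fact (m v) = (1::nat)"
  proof (cases "v \<in> Y")
    case True
    then have "m v = 0" using assms by auto
    moreover have "e v = 0 \<or> e v = 1" using e_le1[of v] by auto
    ultimately show ?thesis by auto
  next
    case False then show ?thesis using e_out by simp
  qed
qed

lemma pd_nz:
  assumes "pderiv_mono X e P m \<noteq> 0"
  shows "monom_on X m" "P (\<lambda>v. m v + e v) \<noteq> 0" "\<forall>v\<in>Y. m v = 0"
    "pderiv_mono X e P m = P (\<lambda>v. m v + e v)"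
proof -
  show m: "monom_on X m" "P (\<lambda>v. m v + e v) \<noteq> 0"
    using assms by (auto simp: pderiv_mono_def split: if_splits)
  show z: "\<forall>v\<in>Y. m v = 0" using shift_zero m by blast
  show "pderiv_mono X e P m = P (\<lambda>v. m v + e v)"
    using coeff_one[OF z] m by (simp add: pderiv_mono_def)
qed

lemma eval_eq:
  assumes b: "\<forall>v\<in>Y. b v = 0"
  shows "poly_eval X (pderiv_mono X e P) b =
         poly_eval X P (\<lambda>v. if v \<in> Y then (if e v \<noteq> 0 then 1 else 0) else b v)"
proof -
  define c where "c = (\<lambda>v. if v \<in> Y then (if e v \<noteq> 0 then 1 else 0) else (b v :: 'a))"
  define D where "D = {m. pderiv_mono X e P m \<noteq> 0}"
  define M' where "M' = {m. P m \<noteq> 0 \<and> (\<forall>v\<in>Y. m v = e v)}"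
  define h where "h = (\<lambda>(m::'v\<Rightarrow>nat) v. m v + e v)"
  have zero: "mono_eval X m c = 0" if P: "P m \<noteq> 0" and ex: "\<exists>v\<in>Y. m v \<noteq> e v" for m
  proof (rule ccontr)
    assume nz: "mono_eval X m c \<noteq> 0"
    hence all: "\<forall>v\<in>X. c v ^ m v \<noteq> 0" using fin by (auto simp: mono_eval_def)
    have le: "m v \<le> e v" if "v \<in> Y" for v
    proof (rule ccontr)
      assume "\<not> m v \<le> e v"
      hence "m v \<noteq> 0" "e v = 0" using e_le1[of v] P_le1[OF P, of v] by auto
      hence "c v ^ m v = 0" using that by (simp add: c_def)
      thus False using all that Y_sub by auto
    qed
    from ex obtain v where v: "v \<in> Y" "m v \<noteq> e v" by blast
    hence i: "part v \<in> {1..k}" "v \<in> X" by (auto simp: yvars_def)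
    let ?A = "{w\<in>X. part w = part v}"
    have "(\<Sum>w\<in>?A. m w) < (\<Sum>w\<in>?A. e w)"
    proof (rule sum_strict_mono_ex1)
      show "finite ?A" using fin by auto
      show "\<forall>x\<in>?A. m x \<le> e x" using le part_eq[OF i(1)] by auto
      show "\<exists>x\<in>?A. m x < e x" using le[OF v(1)] v i by (intro bexI[of _ v]) auto
    qed
    thus False using P_sum[OF P, of "part v"] prt i e_sum[OF i(1)] by simp
  qed
  have s1: "poly_eval X P c = (\<Sum>m\<in>M'. P m * mono_eval X m c)"
    unfolding poly_eval_def
  proof (rule sum.mono_neutral_right)
    show "finite {m. P m \<noteq> 0}" by (rule finite_M)
    show "M' \<subseteq> {m. P m \<noteq> 0}" by (auto simp: M'_def)
    show "\<forall>i\<in>{m. P m \<noteq> 0} - M'. P i * mono_eval X i c = 0"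
    proof
      fix m assume "m \<in> {m. P m \<noteq> 0} - M'"
      hence "P m \<noteq> 0" "\<exists>v\<in>Y. m v \<noteq> e v" by (auto simp: M'_def)
      thus "P m * mono_eval X m c = 0" using zero by simp
    qed
  qed
  have img: "M' = h ` D"
  proof
    show "M' \<subseteq> h ` D"
    proof
      fix m assume m: "m \<in> M'"
      define m0 where "m0 = (\<lambda>v. m v - e v)"
      have eqm: "m = h m0"
      proof -
        have "m x = m x - e x + e x" for x
          using m e_out[of x] by (cases "x \<in> Y") (auto simp: M'_def)
        thus ?thesis by (auto simp: h_def m0_def fun_eq_iff)
      qed
      have z: "\<forall>v\<in>Y. m0 v = 0" using m by (auto simp: m0_def M'_def)
      have mon: "monom_on X m0"
        using m P_mon[of m] by (auto simp: M'_def monom_on_def m0_def)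
      have "pderiv_mono X e P m0 = P m"
        using coeff_one[OF z] mon eqm by (simp add: pderiv_mono_def h_def)
      hence "m0 \<in> D" using m by (simp add: D_def M'_def)
      thus "m \<in> h ` D" using eqm by blast
    qed
    show "h ` D \<subseteq> M'"
      using pd_nz by (auto simp: D_def M'_def h_def e_out)
  qed
  have inj: "inj_on h D" by (auto simp: inj_on_def h_def fun_eq_iff)
  have "poly_eval X P c = (\<Sum>m\<in>D. P (h m) * mono_eval X (h m) c)"
    using s1 img sum.reindex[OF inj] by simp
  also have "\<dots> = (\<Sum>m\<in>D. pderiv_mono X e P m * mono_eval X m b)"
  proof (rule sum.cong[OF refl])
    fix m assume m: "m \<in> D"
    hence z: "\<forall>v\<in>Y. m v = 0" and pd: "pderiv_mono X e P m = P (h m)"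
      using pd_nz[of m] by (auto simp: D_def h_def)
    have "mono_eval X (h m) c = mono_eval X m b"
      unfolding mono_eval_def
    proof (rule prod.cong[OF refl])
      fix v assume "v \<in> X"
      show "c v ^ h m v = b v ^ m v"
      proof (cases "v \<in> Y")
        case True
        have "e v = 0 \<or> e v = 1" using e_le1[of v] by auto
        then show ?thesis using True z by (auto simp: c_def h_def)
      next
        case False then show ?thesis by (simp add: c_def h_def e_out)
      qed
    qed
    thus "P (h m) * mono_eval X (h m) c = pderiv_mono X e P m * mono_eval X m b"
      using pd by simp
  qed
  also have "\<dots> = poly_eval X (pderiv_mono X e P) b"
    by (simp add: poly_eval_def D_def)
  finally show ?thesis by (simp add: c_def)
qed

lemma card_e: "card {v\<in>Y. e v \<noteq> 0} \<le> k"
proof -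
  have "{v\<in>Y. e v \<noteq> 0} = (\<Union>i\<in>{1..k}. {v\<in>{w\<in>X. part w = i}. e v \<noteq> 0})"
    by (auto simp: yvars_def)
  hence "card {v\<in>Y. e v \<noteq> 0} \<le> (\<Sum>i\<in>{1..k}. card {v\<in>{w\<in>X. part w = i}. e v \<noteq> 0})"
    using card_UN_le[of "{1..k}"] by simp
  also have "\<dots> \<le> (\<Sum>i\<in>{1..k}. 1)"
  proof (rule sum_mono)
    fix i assume i: "i \<in> {1..k}"
    have "card {v\<in>{w\<in>X. part w = i}. e v \<noteq> 0} \<le> (\<Sum>v\<in>{w\<in>X. part w = i}. e v)"
      by (rule card_nz_le_sum) (use fin in simp)
    thus "card {v\<in>{w\<in>X. part w = i}. e v \<noteq> 0} \<le> 1" using e_sum[OF i] by simp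
  qed
  finally show ?thesis by simp
qed

end
lemma vs: "vector_space (fscale :: 'a::field \<Rightarrow> ('b \<Rightarrow> 'a) \<Rightarrow> 'b \<Rightarrow> 'a)"
  by unfold_locales (auto simp: fscale_def fun_eq_iff algebra_simps)

lemma span_dim_mono:
  fixes G1 G2 :: "('b \<Rightarrow> 'a::field) set"
  assumes "G1 \<subseteq> G2" "finite G2"
  shows "span_dim G1 \<le> span_dim G2"
proof -
  interpret vector_space "fscale :: 'a \<Rightarrow> ('b \<Rightarrow> 'a) \<Rightarrow> 'b \<Rightarrow> 'a" by (rule vs)
  show ?thesis unfolding span_dim_def dim_span
    by (metis assms basis_exists dim_le_card finite_subset span_base subset_iff)
qed

theorem corollary4p6:
  fixes X :: "'v set" and part :: "'v \<Rightarrow> nat" and r k l :: nat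
    and P :: "('v \<Rightarrow> nat) \<Rightarrow> 'a::field"
  assumes "finite X"
    and "\<forall>v\<in>X. part v \<in> {1..r}"
    and "set_multilinear X part r P"
  shows "Gamma_PSPD X part k l P \<le> Gamma_SED X part k l P"
proof -
  define Y where "Y = yvars X part k"
  define Z where "Z = zvars X part k"
  define S where "S = (bool_points Z :: ('v \<Rightarrow> 'a) set)"
  define F where "F = (\<lambda>(mz, a::'v \<Rightarrow> 'a). eval_vec S
        (\<lambda>b. mono_eval X mz b * poly_eval X P (\<lambda>v. if v \<in> Y then a v else b v)))"
  define G1 where "G1 = {eval_vec S (\<lambda>a. mono_eval X mz a * poly_eval X (pderiv_mono X e P) a)
      | mz e. mz \<in> deg_monoms Z l \<and> e \<in> sml_monoms Y part k}"
  define G2 where "G2 = {eval_vec S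
        (\<lambda>b. mono_eval X mz b * poly_eval X P (\<lambda>v. if v \<in> Y then a v else b v))
      | mz a. mz \<in> deg_monoms Z l \<and> a \<in> bool_points Y \<and> card {v \<in> Y. a v \<noteq> 0} \<le> k}"
  have finZ: "finite Z" using assms(1) by (simp add: Z_def zvars_def)
  have finY: "finite Y" using assms(1) by (simp add: Y_def yvars_def)
  have G2F: "G2 \<subseteq> F ` (deg_monoms Z l \<times> bool_points Y)"
    by (auto simp: G2_def F_def)
  have finG2: "finite G2"
    by (rule finite_subset[OF G2F]) (use finite_deg_monoms[OF finZ] finite_bool_points[OF finY] in auto)
  have sub: "G1 \<subseteq> G2"
  proof
    fix x assume "x \<in> G1"
    then obtain mz e where x: "x = eval_vec S (\<lambda>a. mono_eval X mz a * poly_eval X (pderiv_mono X e P) a)"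
      and mz: "mz \<in> deg_monoms Z l" and e: "e \<in> sml_monoms Y part k"
      by (auto simp: G1_def)
    define a where "a = (\<lambda>v. if v \<in> Y then (if e v \<noteq> 0 then 1 else 0) else (0::'a))"
    have aB: "a \<in> bool_points Y" by (auto simp: a_def bool_points_def)
    have "{v \<in> Y. a v \<noteq> 0} = {v \<in> Y. e v \<noteq> 0}" by (auto simp: a_def)
    hence ca: "card {v \<in> Y. a v \<noteq> 0} \<le> k"
      using card_e[OF assms e[unfolded Y_def]] by (simp add: Y_def)
    have "x = eval_vec S
        (\<lambda>b. mono_eval X mz b * poly_eval X P (\<lambda>v. if v \<in> Y then a v else b v))"
      unfolding x eval_vec_def
    proof (rule ext)
      fix b show "(if b \<in> S then mono_eval X mz b * poly_eval X (pderiv_mono X e P) b else 0) =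
         (if b \<in> S then mono_eval X mz b * poly_eval X P (\<lambda>v. if v \<in> Y then a v else b v) else 0)"
      proof (cases "b \<in> S")
        case True
        hence "\<forall>v\<in>Y. b v = 0" by (auto simp: S_def bool_points_def Z_def zvars_def Y_def)
        from eval_eq[OF assms e[unfolded Y_def] this[unfolded Y_def]]
        have 1: "poly_eval X (pderiv_mono X e P) b = poly_eval X P (\<lambda>v. if v \<in> Y then (if e v \<noteq> 0 then 1 else 0) else b v)"
          unfolding Y_def .
        have 2: "(\<lambda>v. if v \<in> Y then a v else b v) = (\<lambda>v. if v \<in> Y then (if e v \<noteq> 0 then 1 else 0) else b v)"
          by (auto simp: a_def fun_eq_iff)
        have "poly_eval X (pderiv_mono X e P) b = poly_eval X P (\<lambda>v. if v \<in> Y then a v else b v)"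
          unfolding 1 2 ..
        thus ?thesis by simp
      qed simp
    qed
    thus "x \<in> G2" using mz aB ca unfolding G2_def by blast
  qed
  have "Gamma_PSPD X part k l P = span_dim G1"
    by (simp add: Gamma_PSPD_def G1_def S_def Y_def Z_def)
  also have "\<dots> \<le> span_dim G2" by (rule span_dim_mono[OF sub finG2])
  also have "\<dots> = Gamma_SED X part k l P"
    by (simp add: Gamma_SED_def G2_def S_def Y_def Z_def)
  finally show ?thesis .
qed
end
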